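(* Let $d,n\in\mathbb{N}$, let $\mathcal{S}^*\subseteq\{1,\dots,d\}$, let $a_{1:n}\in(\{0,1\}^d)^n$ be arbitrary, and let $x_t:=h_{\mathcal{S}^*}(a_t)$ for $t=1,\dots,n$. Then the cumulative log-loss of the predictor $\pi_d$ satisfies $\mathcal{L}_n(\pi_d)=-\log_2\prod_{t=1}^n\pi_d(x_t\mid x_{<t};a_{1:t})\le (d+1)\log_2(n+1)$.
   Context: For $\mathcal{S}\subseteq\{1,\dots,d\}$ and $a\in\{0,1\}^d$, $h_{\mathcal{S}}(a)=\bigwedge_{i\in\mathcal{S}}a^i$ (equal to $1$ if $\mathcal{S}=\emptyset$), where $a^i$ is the $i$-th component of $a$. The predictor $\pi_d$ is defined as follows. At time $t$, let $\mathcal{D}_t:=\{i\in\{1,\dots,d\}: a_\tau^i=1\text{ for every }\tau<t\text{ with }x_\tau=1\}$ and $y_t:=\bigwedge_{i\in\mathcal{D}_t}a_t^i$ (equal to $1$ if $\mathcal{D}_t=\emptyset$). Then $\pi_d(x\mid x_{<t};a_{1:t}):=\frac{t}{t+1}$ if $x=y_t$ and $:=\frac{1}{t+1}$ if $x\ne y_t$, for $x\in\{0,1\}$. *)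

theory Defs
  imports "HOL-Analysis.Analysis"
begin

text \<open>Binary vectors a \<in> {0,1}^d are represented as predicates on indices (a i \<longleftrightarrow> a^i = 1),
  only the components i \<in> {1..d} matter. Bits are represented as bool (True = 1).
  Sequences are indexed by time t = 1,2,...\<close>

definition h :: "nat set \<Rightarrow> (nat \<Rightarrow> bool) \<Rightarrow> bool" where
  "h S a = (\<forall>i\<in>S. a i)"

definition Dset :: "nat \<Rightarrow> (nat \<Rightarrow> bool) \<Rightarrow> (nat \<Rightarrow> nat \<Rightarrow> bool) \<Rightarrow> nat \<Rightarrow> nat set" where
  "Dset d x a t = {i \<in> {1..d}. \<forall>\<tau>\<in>{1..<t}. x \<tau> \<longrightarrow> a \<tau> i}"

definition yt :: "nat \<Rightarrow> (nat \<Rightarrow> bool) \<Rightarrow> (nat \<Rightarrow> nat \<Rightarrow> bool) \<Rightarrow> nat \<Rightarrow> bool" where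
  "yt d x a t = (\<forall>i\<in>Dset d x a t. a t i)"

text \<open>pi_d(b | x_{<t}; a_{1:t}); depends only on x restricted to {1..<t} and a restricted to {1..t}.\<close>
definition pi_d :: "nat \<Rightarrow> bool \<Rightarrow> (nat \<Rightarrow> bool) \<Rightarrow> (nat \<Rightarrow> nat \<Rightarrow> bool) \<Rightarrow> nat \<Rightarrow> real" where
  "pi_d d b x a t = (if b = yt d x a t then real t / (real t + 1) else 1 / (real t + 1))"

definition cum_loss :: "nat \<Rightarrow> nat \<Rightarrow> (nat \<Rightarrow> bool) \<Rightarrow> (nat \<Rightarrow> nat \<Rightarrow> bool) \<Rightarrow> real" where
  "cum_loss d n x a = - log 2 (\<Prod>t\<in>{1..n}. pi_d d (x t) x a t)"

end

theory Submission
  imports Defs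
begin

lemma Dset_Suc:
  assumes "t \<ge> 1"
  shows "Dset d x a (Suc t) = (if x t then {i \<in> Dset d x a t. a t i} else Dset d x a t)"
proof -
  have "{1..<Suc t} = insert t {1..<t}" using assms by auto
  thus ?thesis unfolding Dset_def by auto
qed

lemma Dset_fin: "finite (Dset d x a t)" unfolding Dset_def by auto

lemma Dset_card: "card (Dset d x a t) \<le> d"
proof -
  have "card (Dset d x a t) \<le> card {1..d}" unfolding Dset_def by (rule card_mono) auto
  thus ?thesis by simp
qed

lemma S_sub:
  assumes "S \<subseteq> {1..d}" and "\<And>\<tau>. \<tau> \<in> {1..<t} \<Longrightarrow> x \<tau> = h S (a \<tau>)"
  shows "S \<subseteq> Dset d x a t"
  using assms unfolding Dset_def h_def by auto

lemma step:
  assumes "S \<subseteq> {1..d}" and "\<And>\<tau>. \<tau> \<in> {1..t} \<Longrightarrow> x \<tau> = h S (a \<tau>)" and "t \<ge> 1"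
  shows "Dset d x a (Suc t) \<subseteq> Dset d x a t \<and>
    (x t \<noteq> yt d x a t \<longrightarrow> card (Dset d x a (Suc t)) < card (Dset d x a t))"
proof -
  have S: "S \<subseteq> Dset d x a t" using S_sub[of S d t x a] assms by auto
  have xt: "x t = h S (a t)" using assms by auto
  show ?thesis
  proof (intro conjI impI)
    show "Dset d x a (Suc t) \<subseteq> Dset d x a t" using Dset_Suc[OF assms(3)] by auto
  next
    assume m: "x t \<noteq> yt d x a t"
    have "x t"
    proof (rule ccontr)
      assume "\<not> x t"
      then have "yt d x a t" using m by auto
      then have "h S (a t)" using S unfolding yt_def h_def by auto
      then show False using xt \<open>\<not> x t\<close> by simp
    qed
    then have "\<not> yt d x a t" using m by simp
    then obtain i where i: "i \<in> Dset d x a t" "\<not> a t i" unfolding yt_def by auto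
    have "Dset d x a (Suc t) \<subset> Dset d x a t"
      using Dset_Suc[OF assms(3)] \<open>x t\<close> i by auto
    then show "card (Dset d x a (Suc t)) < card (Dset d x a t)"
      by (rule psubset_card_mono[OF Dset_fin])
  qed
qed

lemma main:
  assumes "S \<subseteq> {1..d}" and "\<forall>t\<in>{1..m}. x t = h S (a t)"
  shows "(\<Prod>t\<in>{1..m}. pi_d d (x t) x a t) \<ge> (1 / (real m + 1)) ^ (d - card (Dset d x a (Suc m)) + 1)"
  using assms(2)
proof (induction m)
  case 0
  then show ?case by simp
next
  case (Suc m)
  define P where "P = (\<Prod>t\<in>{1..m}. pi_d d (x t) x a t)"
  define k where "k = d - card (Dset d x a (Suc m))"
  define k' where "k' = d - card (Dset d x a (Suc (Suc m)))"
  have IH: "P \<ge> (1 / (real m + 1)) ^ (k + 1)" using Suc unfolding P_def k_def by auto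
  have st: "Dset d x a (Suc (Suc m)) \<subseteq> Dset d x a (Suc m) \<and>
    (x (Suc m) \<noteq> yt d x a (Suc m) \<longrightarrow> card (Dset d x a (Suc (Suc m))) < card (Dset d x a (Suc m)))"
    by (rule step[OF assms(1)]) (use Suc.prems in auto)
  have kk: "k \<le> k'" unfolding k_def k'_def
    using st card_mono[OF Dset_fin, of "Dset d x a (Suc (Suc m))" d x a "Suc m"] by auto
  have prod: "(\<Prod>t\<in>{1..Suc m}. pi_d d (x t) x a t) = P * pi_d d (x (Suc m)) x a (Suc m)"
    unfolding P_def by (simp add: prod.nat_ivl_Suc')
  have P0: "P \<ge> 0" using IH by (meson order_trans zero_le_divide_1_iff zero_le_power of_nat_0_le_iff add_nonneg_nonneg zero_le_one)
  have b1: "(1 / (real m + 2)) ^ j \<le> (1 / (real m + 1)) ^ j" for j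
    by (rule power_mono) (auto simp: divide_simps)
  have b2: "(1 / (real m + 2)) ^ j' \<le> (1 / (real m + 2)) ^ j" if "j \<le> j'" for j j'
    by (rule power_decreasing[OF that]) auto
  show ?case
  proof (cases "x (Suc m) = yt d x a (Suc m)")
    case True
    have pi: "pi_d d (x (Suc m)) x a (Suc m) = (real m + 1) / (real m + 2)"
      unfolding pi_d_def using True by (simp add: add.commute)
    have "(1 / (real (Suc m) + 1)) ^ (k' + 1) = (1/(real m + 2)) * (1/(real m + 2))^k'"
      by (simp add: add.commute)
    also have "\<dots> \<le> (1/(real m + 2)) * (1/(real m + 1))^k"
      using order_trans[OF b2[OF kk] b1[of k]] by (intro mult_left_mono) auto
    also have "\<dots> = (1 / (real m + 1)) ^ (k + 1) * ((real m + 1) / (real m + 2))"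
      by (simp add: power_divide)
    also have "\<dots> \<le> P * ((real m + 1) / (real m + 2))"
      using IH by (intro mult_right_mono) auto
    finally show ?thesis using prod pi unfolding k'_def by simp
  next
    case False
    have kk2: "k + 1 \<le> k'" using st False Dset_card[of d x a "Suc m"] unfolding k_def k'_def by auto
    have pi: "pi_d d (x (Suc m)) x a (Suc m) = 1 / (real m + 2)"
      unfolding pi_d_def using False by simp
    have "(1 / (real (Suc m) + 1)) ^ (k' + 1) = (1/(real m + 2))^k' * (1/(real m + 2))"
      by (simp add: add.commute)
    also have "\<dots> \<le> (1/(real m + 1))^(k+1) * (1/(real m + 2))"
      using b1[of "k+1"] b2[OF kk2] by (intro mult_right_mono) (auto intro: order_trans)
    also have "\<dots> \<le> P * (1 / (real m + 2))"
      using IH by (intro mult_right_mono) auto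
    finally show ?thesis using prod pi unfolding k'_def by simp
  qed
qed

theorem theorem5:
  fixes d n :: nat and S :: "nat set" and a :: "nat \<Rightarrow> nat \<Rightarrow> bool" and x :: "nat \<Rightarrow> bool"
  assumes "S \<subseteq> {1..d}"
    and "\<And>t. t \<in> {1..n} \<Longrightarrow> x t = h S (a t)"
  shows "cum_loss d n x a \<le> real (d + 1) * log 2 (real n + 1)"
proof -
  define P where "P = (\<Prod>t\<in>{1..n}. pi_d d (x t) x a t)"
  define k where "k = d - card (Dset d x a (Suc n))"
  have m: "P \<ge> (1 / (real n + 1)) ^ (k + 1)" unfolding P_def k_def
    using main[OF assms(1)] assms(2) by auto
  have "(1 / (real n + 1)) ^ (d + 1) \<le> (1 / (real n + 1)) ^ (k + 1)"
    by (rule power_decreasing) (auto simp: k_def)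
  with m have m2: "P \<ge> (1 / (real n + 1)) ^ (d + 1)" by linarith
  have pos: "(1 / (real n + 1)) ^ (d + 1) > 0" by simp
  have "log 2 ((1 / (real n + 1)) ^ (d + 1)) \<le> log 2 P"
    using m2 pos by (subst log_le_cancel_iff) (use less_le_trans[OF pos m2] in auto)
  moreover have "log 2 ((1 / (real n + 1)) ^ (d + 1)) = - (real (d+1) * log 2 (real n + 1))"
    by (simp add: log_nat_power log_divide algebra_simps)
  ultimately show ?thesis unfolding cum_loss_def P_def[symmetric] by linarith
qed

end
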